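(* Let $\Gamma$ be a $\Theta$-Anosov subgroup of $G$. Then \[\delta_{1,2}(\rho_\Theta(\Gamma))=\sup_{\theta\in\Theta}\delta_\theta(\Gamma).\]
   Context: $G$ is a semisimple Lie group with finite center, with fixed maximal compact $K$, Cartan subspace $\mathfrak{a}$, closed Weyl chamber $\mathfrak{a}_+$, simple roots $\Delta^s$, Cartan projection $\mu:G\to\mathfrak{a}_+$ ($g\in K\exp(\mu(g))K$); $\Theta\subset\Delta^s$ non-empty. A finitely generated $\Gamma\subset G$ is $\Theta$-Anosov if there are $C,C'>0$ with $\theta(\mu(g))\ge C|g|-C'$ for all $g\in\Gamma,\theta\in\Theta$ ($|g|$ word length). $\rho_\Theta=\bigotimes_{\theta\in\Theta}\rho_\theta:G\to\mathrm{SL}(\bigotimes_{\theta\in\Theta}V_\theta)$ is the tensor product of the fundamental representations $\rho_\theta$; it satisfies $\mu_1(\rho_\Theta(g))-\mu_2(\rho_\Theta(g))=\min_{\theta\in\Theta}\theta(\mu(g))$ for all $g\in G$, where for a matrix $\mu_i$ denotes the log of its $i$-th singular value. Here $\delta_{1,2}(\rho_\Theta(\Gamma))=\limsup_{R\to\infty}\frac1R\log\#\{\gamma\in\Gamma:(\mu_1-\mu_2)(\rho_\Theta(\gamma))\le R\}$ and $\delta_\theta(\Gamma)=\limsup_{R\to\infty}\frac1R\log\#\{\gamma\in\Gamma:\theta(\mu(\gamma))\le R\}$. *)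

theory Defs
  imports "HOL-Algebra.Generated_Groups" "HOL-Analysis.Analysis"
begin

definition word_length :: "('g, 'b) monoid_scheme \<Rightarrow> 'g set \<Rightarrow> 'g \<Rightarrow> nat" where
  "word_length G S g = (LEAST n. \<exists>xs. length xs = n \<and>
      set xs \<subseteq> S \<union> m_inv G ` S \<and> foldr (\<lambda>a b. a \<otimes>\<^bsub>G\<^esub> b) xs \<one>\<^bsub>G\<^esub> = g)"

definition Theta_Anosov ::
  "('g, 'b) monoid_scheme \<Rightarrow> 'g set \<Rightarrow> ('g \<Rightarrow> 'a) \<Rightarrow> ('a \<Rightarrow> real) set \<Rightarrow> bool" where
  "Theta_Anosov G \<Gamma> \<mu> \<Theta> \<longleftrightarrow>
     (\<exists>S. finite S \<and> S \<subseteq> carrier G \<and> generate G S = \<Gamma> \<and>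
        (\<exists>C C'. C > 0 \<and> C' > 0 \<and>
           (\<forall>g\<in>\<Gamma>. \<forall>\<theta>\<in>\<Theta>. \<theta> (\<mu> g) \<ge> C * real (word_length G S g) - C')))"

definition log_count :: "'g set \<Rightarrow> ereal" where
  "log_count A = (if finite A then ereal (ln (real (card A))) else \<infinity>)"

definition growth_exp :: "'g set \<Rightarrow> ('g \<Rightarrow> real) \<Rightarrow> ereal" where
  "growth_exp X f = Limsup at_top (\<lambda>R::real. log_count {x\<in>X. f x \<le> R} / ereal R)"

text \<open>Largest and second largest singular values of a real square matrix
  (operator norm, and Courant--Fischer min-max), and mu_1 - mu_2 (log singular value gap).\<close>
definition sv1 :: "real^'n^'n \<Rightarrow> real" where
  "sv1 A = onorm ((*v) A)"

definition sv2 :: "real^'n^'n \<Rightarrow> real" where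
  "sv2 A = (INF v\<in>{v::real^'n. norm v = 1}.
              SUP x\<in>{x. norm x = 1 \<and> inner x v = 0}. norm (A *v x))"

definition mu12 :: "real^'n^'n \<Rightarrow> real" where
  "mu12 A = ln (sv1 A) - ln (sv2 A)"

end

theory Submission
  imports Defs
begin

lemma ln_nat_mono:
  assumes "m \<le> n"
  shows "ln (real m) \<le> ln (real (n::nat))"
proof (cases "m = 0")
  case True
  then show ?thesis by (cases "n = 0") auto
next
  case False
  then show ?thesis using assms by (subst ln_le_cancel_iff) auto
qed

lemma lc_mono_div:
  assumes "A \<subseteq> B" "R > 0"
  shows "log_count A / ereal R \<le> log_count B / ereal R"
proof (cases "finite B")
  case True
  then have "finite A" using assms(1) finite_subset by blast
  moreover have "card A \<le> card B" using True assms(1) card_mono by blast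
  ultimately have "ln (real (card A)) \<le> ln (real (card B))"
    by (intro ln_nat_mono)
  then show ?thesis using True \<open>finite A\<close> assms(2)
    by (simp add: log_count_def divide_right_mono)
next
  case False
  then show ?thesis using assms(2) by (simp add: log_count_def)
qed

lemma lc_union_bound:
  assumes fin: "finite I" and ne: "I \<noteq> {}" and R: "R > 0"
  shows "\<exists>i\<in>I. log_count (\<Union>i\<in>I. A i) / ereal R
            \<le> ereal (ln (real (card I)) / R) + log_count (A i) / ereal R"
proof (cases "\<exists>i\<in>I. infinite (A i)")
  case True
  then obtain i where i: "i \<in> I" "infinite (A i)" by blast
  then show ?thesis using R by (intro bexI[OF _ i(1)]) (simp add: log_count_def)
next
  case False
  then have finA: "\<forall>i\<in>I. finite (A i)" by blast
  obtain i0 where i0: "i0 \<in> I" "\<forall>i\<in>I. card (A i) \<le> card (A i0)"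
  proof -
    have "Max ((\<lambda>i. card (A i)) ` I) \<in> (\<lambda>i. card (A i)) ` I"
      using fin ne by (intro Max_in) auto
    then obtain i0 where "i0 \<in> I" "card (A i0) = Max ((\<lambda>i. card (A i)) ` I)" by auto
    moreover have "\<forall>i\<in>I. card (A i) \<le> Max ((\<lambda>i. card (A i)) ` I)"
      using fin by auto
    ultimately show ?thesis using that by auto
  qed
  have finB: "finite (\<Union>i\<in>I. A i)" using fin finA by blast
  have "card (\<Union>i\<in>I. A i) \<le> (\<Sum>i\<in>I. card (A i))" using fin by (rule card_UN_le)
  also have "\<dots> \<le> card I * card (A i0)" using sum_bounded_above[of I "\<lambda>i. card (A i)" "card (A i0)"] i0(2) by simp
  finally have cB: "card (\<Union>i\<in>I. A i) \<le> card I * card (A i0)" .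
  have kpos: "card I > 0" using fin ne by (simp add: card_gt_0_iff)
  have key: "ln (real (card (\<Union>i\<in>I. A i))) \<le> ln (real (card I)) + ln (real (card (A i0)))"
  proof (cases "card (\<Union>i\<in>I. A i) = 0")
    case True
    have "ln (real (card I)) \<ge> 0" using kpos by simp
    moreover have "ln (real (card (A i0))) \<ge> 0" by (cases "card (A i0) = 0") auto
    ultimately show ?thesis using True by simp
  next
    case False
    then have "card (A i0) > 0" using cB by (metis mult_is_0 le_0_eq neq0_conv)
    then have "ln (real (card (\<Union>i\<in>I. A i))) \<le> ln (real (card I * card (A i0)))"
      using ln_nat_mono[OF cB] by blast
    also have "\<dots> = ln (real (card I)) + ln (real (card (A i0)))"
      using kpos \<open>card (A i0) > 0\<close> by (simp add: ln_mult)
    finally show ?thesis .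
  qed
  have "ln (real (card (\<Union>i\<in>I. A i))) / R \<le> ln (real (card I)) / R + ln (real (card (A i0))) / R"
    using key R by (simp add: divide_right_mono add_divide_distrib[symmetric])
  then show ?thesis using finB finA i0(1) R
    by (intro bexI[OF _ i0(1)]) (simp add: log_count_def)
qed

theorem lemma2p39:
  fixes G :: "('g, 'b) monoid_scheme"
    and \<Gamma> :: "'g set"
    and \<mu> :: "'g \<Rightarrow> 'a::euclidean_space"
    and \<Theta> :: "('a \<Rightarrow> real) set"
    and \<rho> :: "'g \<Rightarrow> real^'n^'n"
  assumes "group G"
    and "subgroup \<Gamma> G"
    and "finite \<Theta>" and "\<Theta> \<noteq> {}"
    and "\<forall>\<theta>\<in>\<Theta>. linear \<theta>"
    and "CARD('n) \<ge> 2"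
    and "\<forall>g\<in>carrier G. \<forall>h\<in>carrier G. \<rho> (g \<otimes>\<^bsub>G\<^esub> h) = \<rho> g ** \<rho> h"
    and "\<forall>g\<in>carrier G. det (\<rho> g) = 1"
    and "\<forall>g\<in>carrier G. mu12 (\<rho> g) = Min ((\<lambda>\<theta>. \<theta> (\<mu> g)) ` \<Theta>)"
    and "Theta_Anosov G \<Gamma> \<mu> \<Theta>"
  shows "growth_exp \<Gamma> (\<lambda>\<gamma>. mu12 (\<rho> \<gamma>)) = (SUP \<theta>\<in>\<Theta>. growth_exp \<Gamma> (\<lambda>\<gamma>. \<theta> (\<mu> \<gamma>)))"
proof -
  define A where "A \<theta> (R::real) = {\<gamma>\<in>\<Gamma>. \<theta> (\<mu> \<gamma>) \<le> R}" for \<theta> R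
  define h where "h \<theta> (R::real) = log_count (A \<theta> R) / ereal R" for \<theta> R
  define F where "F (R::real) = log_count {\<gamma>\<in>\<Gamma>. mu12 (\<rho> \<gamma>) \<le> R} / ereal R" for R
  have sub: "\<Gamma> \<subseteq> carrier G" using assms(2) subgroup.subset by blast
  have Beq: "{\<gamma>\<in>\<Gamma>. mu12 (\<rho> \<gamma>) \<le> R} = (\<Union>\<theta>\<in>\<Theta>. A \<theta> R)" for R
  proof -
    have "mu12 (\<rho> \<gamma>) \<le> R \<longleftrightarrow> (\<exists>\<theta>\<in>\<Theta>. \<theta> (\<mu> \<gamma>) \<le> R)" if "\<gamma> \<in> \<Gamma>" for \<gamma>
    proof -
      have "mu12 (\<rho> \<gamma>) = Min ((\<lambda>\<theta>. \<theta> (\<mu> \<gamma>)) ` \<Theta>)"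
        using that sub assms(9) by blast
      then show ?thesis using assms(3,4) by (simp add: Min_le_iff)
    qed
    then show ?thesis unfolding A_def by auto
  qed
  have ev: "eventually (\<lambda>R::real. R > 0) at_top" by (rule eventually_gt_at_top)
  have lower: "eventually (\<lambda>R. h \<theta> R \<le> F R) at_top" if "\<theta> \<in> \<Theta>" for \<theta>
    using ev
  proof eventually_elim
    case (elim R)
    show ?case unfolding h_def F_def Beq using that elim
      by (intro lc_mono_div) auto
  qed
  have upper: "eventually (\<lambda>R. \<exists>\<theta>\<in>\<Theta>. F R \<le> ereal (ln (real (card \<Theta>)) / R) + h \<theta> R) at_top"
    using ev
  proof eventually_elim
    case (elim R)
    show ?case unfolding h_def F_def Beq
      using lc_union_bound[OF assms(3,4) elim, of "\<lambda>\<theta>. A \<theta> R"] by simp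
  qed
  have gF: "growth_exp \<Gamma> (\<lambda>\<gamma>. mu12 (\<rho> \<gamma>)) = Limsup at_top F"
    unfolding growth_exp_def F_def ..
  have gh: "growth_exp \<Gamma> (\<lambda>\<gamma>. \<theta> (\<mu> \<gamma>)) = Limsup at_top (h \<theta>)" for \<theta>
    unfolding growth_exp_def h_def A_def ..
  define M where "M = (SUP \<theta>\<in>\<Theta>. Limsup at_top (h \<theta>))"
  have ge: "M \<le> Limsup at_top F"
    unfolding M_def by (intro SUP_least Limsup_mono lower)
  have le: "Limsup at_top F \<le> M"
    unfolding Limsup_le_iff
  proof (intro allI impI)
    fix y assume "y > M"
    then obtain r where r: "M < ereal r" "ereal r < y" using ereal_dense2 by blast
    then obtain r' where r': "M < ereal r'" "ereal r' < ereal r" using ereal_dense2 by blast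
    have each: "eventually (\<lambda>R. h \<theta> R < ereal r') at_top" if "\<theta> \<in> \<Theta>" for \<theta>
    proof (rule Limsup_lessD)
      have "Limsup at_top (h \<theta>) \<le> M" unfolding M_def using that by (rule SUP_upper)
      then show "Limsup at_top (h \<theta>) < ereal r'" using r'(1) by simp
    qed
    have all: "eventually (\<lambda>R. \<forall>\<theta>\<in>\<Theta>. h \<theta> R < ereal r') at_top"
      using each assms(3) by (simp add: eventually_ball_finite)
    have "((\<lambda>R::real. ln (real (card \<Theta>)) / R) \<longlongrightarrow> 0) at_top"
      by (intro tendsto_divide_0[OF tendsto_const] filterlim_at_top_imp_at_infinity[OF filterlim_ident])
    moreover have "r - r' > 0" using r' by simp
    ultimately have small: "eventually (\<lambda>R. ln (real (card \<Theta>)) / R < r - r') at_top"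
      by (rule order_tendstoD)
    show "eventually (\<lambda>R. F R < y) at_top"
      using all small upper
    proof eventually_elim
      case (elim R)
      then obtain \<theta> where th: "\<theta> \<in> \<Theta>" "F R \<le> ereal (ln (real (card \<Theta>)) / R) + h \<theta> R" by blast
      have "h \<theta> R < ereal r'" using elim(1) th(1) by blast
      then have "ereal (ln (real (card \<Theta>)) / R) + h \<theta> R < ereal (ln (real (card \<Theta>)) / R) + ereal r'"
        by (intro ereal_less_add) auto
      also have "\<dots> < ereal r" using elim(2) by simp
      finally show ?case using th(2) r(2) by simp
    qed
  qed
  show ?thesis using ge le unfolding gF gh M_def by simp
qed

end
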